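(* Let $\alpha$ be a positive quadratic irrational and $A_1,A_2\in GL(2,\mathbb Z)$. If $\pi(A_1)$ and $\pi(A_2)$ restrict to isometric automorphisms of $\mathcal A_\alpha$, then $A_1A_2=A_2A_1$.
   Context: For $f\in C(\mathbb T^2)$ (with $\mathbb T$ the unit circle), the Fourier transform is $\hat f(m,n)=\int_{\mathbb T^2} f(e^{is},e^{it})e^{-i(ms+nt)}\,d\mu$, $\mu$ normalized Lebesgue measure. For a positive irrational $\alpha$, $\mathcal A_\alpha=\{f\in C(\mathbb T^2): \hat f(m,n)=0 \text{ whenever } m+\alpha n<0\}$, a uniform algebra with the sup norm on $\mathbb T^2$. For $A=\begin{bmatrix} a&b\\ c&d\end{bmatrix}\in GL(2,\mathbb Z)$, $\pi(A):C(\mathbb T^2)\to C(\mathbb T^2)$ is $\pi(A)(f)=f\circ\varphi$ with $\varphi(z,w)=(z^aw^b,z^cw^d)$. *)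

theory Defs
  imports "HOL-Analysis.Analysis"
begin

text \<open>Elements of C(T^2) are represented as
  functions on C x C that are continuous on the torus and vanish off it
  (so that they are determined by their restriction to the torus).\<close>

definition torus :: "(complex \<times> complex) set" where
  "torus = {(z, w). cmod z = 1 \<and> cmod w = 1}"

definition CT2 :: "(complex \<times> complex \<Rightarrow> complex) set" where
  "CT2 = {f. continuous_on torus f \<and> (\<forall>p. p \<notin> torus \<longrightarrow> f p = 0)}"

definition fourier :: "(complex \<times> complex \<Rightarrow> complex) \<Rightarrow> int \<Rightarrow> int \<Rightarrow> complex" where
  "fourier f m n = integral (cbox (0, 0) (2 * pi, 2 * pi))
      (\<lambda>(s, t). f (cis s, cis t) * cis (- (of_int m * s + of_int n * t))) / (4 * pi\<^sup>2)"

definition A_alpha :: "real \<Rightarrow> (complex \<times> complex \<Rightarrow> complex) set" where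
  "A_alpha \<alpha> = {f \<in> CT2. \<forall>m n. of_int m + \<alpha> * of_int n < 0 \<longrightarrow> fourier f m n = 0}"

definition supnorm :: "(complex \<times> complex \<Rightarrow> complex) \<Rightarrow> real" where
  "supnorm f = Sup ((\<lambda>p. cmod (f p)) ` torus)"

definition GL2Z :: "(int^2^2) set" where
  "GL2Z = {A. \<bar>det A\<bar> = 1}"

text \<open>phi(z,w) = (z^a w^b, z^c w^d) for A = [[a,b],[c,d]].\<close>
definition torus_map :: "int^2^2 \<Rightarrow> complex \<times> complex \<Rightarrow> complex \<times> complex" where
  "torus_map A = (\<lambda>(z, w). (z powi (A$1$1) * w powi (A$1$2), z powi (A$2$1) * w powi (A$2$2)))"

definition piA :: "int^2^2 \<Rightarrow> (complex \<times> complex \<Rightarrow> complex) \<Rightarrow> (complex \<times> complex \<Rightarrow> complex)" where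
  "piA A f = (\<lambda>p. if p \<in> torus then f (torus_map A p) else 0)"

definition isometric_automorphism :: "real \<Rightarrow> int^2^2 \<Rightarrow> bool" where
  "isometric_automorphism \<alpha> A \<longleftrightarrow>
     bij_betw (piA A) (A_alpha \<alpha>) (A_alpha \<alpha>) \<and>
     (\<forall>f \<in> A_alpha \<alpha>. supnorm (piA A f) = supnorm f)"

definition quadratic_irrational :: "real \<Rightarrow> bool" where
  "quadratic_irrational x \<longleftrightarrow> x \<notin> \<rat> \<and>
     (\<exists>a b c :: int. a \<noteq> 0 \<and> of_int a * x\<^sup>2 + of_int b * x + of_int c = 0)"

end

theory Submission imports Defs "HOL-Analysis.Kronecker_Approximation_Theorem" begin

lemma int_cis: fixes k :: int
  shows "integral {0..2*pi} (\<lambda>s. cis (of_int k * s)) = (if k = 0 then 2*pi else 0)"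
proof (cases "k = 0")
  case True then show ?thesis by (simp add: scaleR_conv_of_real)
next
  case False
  have "integral {0..2*pi} (\<lambda>s. exp ((\<i> * of_int k) * complex_of_real s)) = (exp ((\<i> * of_int k) * of_real (2*pi)) - 1) / (\<i> * of_int k)"
    by (rule integral_exp) (use False in auto)
  moreover have "exp ((\<i> * of_int k) * of_real (2*pi)) = 1"
  proof -
    have "exp ((\<i> * of_int k) * of_real (2*pi)) = cis (2 * pi * real_of_int k)"
      by (simp add: cis_conv_exp mult_ac)
    also have "\<dots> = 1" by (rule cis_multiple_2pi) simp
    finally show ?thesis .
  qed
  ultimately show ?thesis using False by (simp add: cis_conv_exp mult_ac)
qed

definition mono :: "int \<Rightarrow> int \<Rightarrow> complex \<times> complex \<Rightarrow> complex" where
  "mono p q = (\<lambda>(z,w). if (z,w) \<in> torus then z powi p * w powi q else 0)"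

lemma cis_torus: "(cis s, cis t) \<in> torus" by (simp add: torus_def)

lemma fourier_mono: "fourier (mono p q) m n = (if p = m \<and> q = n then 1 else 0)"
proof -
  let ?k = "p - m" and ?l = "q - n"
  have eq: "(\<lambda>(s, t). mono p q (cis s, cis t) * cis (- (of_int m * s + of_int n * t)))
      = (\<lambda>x. cis (of_int ?k * fst x) * cis (of_int ?l * snd x))"
    by (rule ext, clarsimp simp: mono_def cis_torus cis_power_int cis_mult[symmetric]) (simp add: cis_mult algebra_simps)
  have cont: "continuous_on (cbox (0, 0) (2 * pi, 2 * pi)) (\<lambda>x::real\<times>real. cis (of_int ?k * fst x) * cis (of_int ?l * snd x))"
    by (intro continuous_intros)
  have "integral (cbox (0, 0) (2 * pi, 2 * pi)) (\<lambda>x. cis (of_int ?k * fst x) * cis (of_int ?l * snd x))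
     = integral (cbox 0 (2*pi)) (\<lambda>s. integral (cbox 0 (2*pi)) (\<lambda>t. cis (of_int ?k * s) * cis (of_int ?l * t)))"
    using integral_prod_continuous[OF cont] by simp
  also have "\<dots> = integral {0..2*pi} (\<lambda>s. cis (of_int ?k * s) * integral {0..2*pi} (\<lambda>t. cis (of_int ?l * t)))"
    by simp
  also have "\<dots> = integral {0..2*pi} (\<lambda>s. cis (of_int ?k * s)) * integral {0..2*pi} (\<lambda>t. cis (of_int ?l * t))"
    by simp
  also have "\<dots> = (if ?k = 0 then 2*pi else 0) * (if ?l = 0 then 2*pi else 0)"
    by (simp only: int_cis of_real_mult)
  finally have C: "integral (cbox (0, 0) (2 * pi, 2 * pi)) (\<lambda>x. cis (of_int ?k * fst x) * cis (of_int ?l * snd x)) = (if ?k = 0 then 2*pi else 0) * (if ?l = 0 then 2*pi else 0)" .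
  show ?thesis
    unfolding fourier_def eq C by (auto simp: power2_eq_square)
qed

lemma mono_CT2: "mono p q \<in> CT2"
proof -
  have "continuous_on torus (\<lambda>x. fst x powi p * snd x powi q)"
    by (intro continuous_intros) (auto simp: torus_def)
  then have "continuous_on torus (mono p q)"
    by (rule continuous_on_cong[THEN iffD1, rotated 2]) (auto simp: mono_def)
  then show ?thesis by (auto simp: CT2_def mono_def)
qed

lemma mono_A: "of_int p + \<alpha> * of_int q \<ge> 0 \<Longrightarrow> mono p q \<in> A_alpha \<alpha>"
  unfolding A_alpha_def using mono_CT2 by (auto simp: fourier_mono)

lemma torus_map_torus: "x \<in> torus \<Longrightarrow> torus_map A x \<in> torus"
  by (auto simp: torus_def torus_map_def norm_mult norm_power_int)

lemma piA_mono: "piA A (mono p q) = mono (A$1$1 * p + A$2$1 * q) (A$1$2 * p + A$2$2 * q)"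
proof
  fix x :: "complex \<times> complex"
  show "piA A (mono p q) x = mono (A$1$1 * p + A$2$1 * q) (A$1$2 * p + A$2$2 * q) x"
  proof (cases "x \<in> torus")
    case True
    obtain z w where x: "x = (z,w)" by fastforce
    with True have nz: "z \<noteq> 0" "w \<noteq> 0" by (auto simp: torus_def)
    show ?thesis using True torus_map_torus[OF True, of A] nz
      by (simp add: piA_def mono_def x torus_map_def power_int_mult_distrib power_int_mult[symmetric]
            power_int_add mult_ac)
  qed (auto simp: piA_def mono_def split: prod.splits)
qed

lemma key_ineq:
  assumes "isometric_automorphism \<alpha> A" "of_int p + \<alpha> * of_int q \<ge> 0"
  shows "of_int (A$1$1 * p + A$2$1 * q) + \<alpha> * of_int (A$1$2 * p + A$2$2 * q) \<ge> 0"
proof (rule ccontr)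
  assume neg: "\<not> ?thesis"
  have "piA A (mono p q) \<in> A_alpha \<alpha>"
    using assms mono_A[OF assms(2)] unfolding isometric_automorphism_def bij_betw_def by auto
  then have "fourier (piA A (mono p q)) (A$1$1 * p + A$2$1 * q) (A$1$2 * p + A$2$2 * q) = 0"
    using neg unfolding A_alpha_def by auto
  then show False by (simp add: piA_mono fourier_mono)
qed

lemma density:
  fixes \<alpha> x y :: real
  assumes irr: "\<alpha> \<notin> \<rat>" and H: "\<And>p q::int. of_int p + \<alpha> * of_int q \<ge> 0 \<Longrightarrow> x * of_int p + y * of_int q \<ge> 0"
  shows "y = x * \<alpha>"
proof -
  define D where "D = y - x * \<alpha>"
  have x0: "x \<ge> 0" using H[of 1 0] by simp
  have bound: "\<bar>D\<bar> \<le> x * e" if e: "e > 0" for e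
  proof -
    obtain h k :: int where k: "k > 0" "\<bar>of_int k * \<alpha> - of_int h - e/2\<bar> < e/2"
      using sequence_of_fractional_parts_is_dense[OF irr half_gt_zero[OF e], where \<alpha>="e/2"] by blast
    define d where "d = of_int k * \<alpha> - of_int h"
    have d: "0 < d" "d < e" using k(2) unfolding d_def by linarith+
    have "x * of_int (-h) + y * of_int k \<ge> 0" using H[of "-h" k] d by (simp add: d_def algebra_simps)
    then have "x * d + D * of_int k \<ge> 0" by (simp add: d_def D_def algebra_simps)
    moreover have "x * d \<le> x * e" using d x0 by (simp add: mult_left_mono)
    ultimately have Dk: "D * of_int k \<ge> - (x * e)" by linarith
    have k1: "real_of_int k \<ge> 1" using k(1) by simp
    have xe: "x * e \<ge> 0" using x0 e by simp
    have "D * (of_int k - 1) \<le> 0 \<or> D \<ge> 0" using k1 by (auto simp: not_le mult_nonpos_nonneg)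
    then have A: "D \<ge> - (x * e)" using Dk xe by (auto simp: right_diff_distrib)
    obtain h' k' :: int where k': "k' > 0" "\<bar>of_int k' * \<alpha> - of_int h' - (- e/2)\<bar> < e/2"
      using sequence_of_fractional_parts_is_dense[OF irr half_gt_zero[OF e], where \<alpha>="-e/2"] by blast
    define d' where "d' = of_int h' - of_int k' * \<alpha>"
    have d': "0 < d'" "d' < e" using k'(2) unfolding d'_def by linarith+
    have "x * of_int h' + y * of_int (-k') \<ge> 0" using H[of h' "-k'"] d' by (simp add: d'_def algebra_simps)
    then have "x * d' - D * of_int k' \<ge> 0" by (simp add: d'_def D_def algebra_simps)
    moreover have "x * d' \<le> x * e" using d' x0 by (simp add: mult_left_mono)
    ultimately have Dk': "D * of_int k' \<le> x * e" by linarith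
    have k1': "real_of_int k' \<ge> 1" using k'(1) by simp
    have "D * (of_int k' - 1) \<ge> 0 \<or> D \<le> 0" using k1' by (auto simp: not_le)
    then have B: "D \<le> x * e" using Dk' xe by (auto simp: right_diff_distrib)
    show ?thesis using A B by auto
  qed
  have "D = 0"
  proof (rule ccontr)
    assume "D \<noteq> 0"
    then have "\<bar>D\<bar> > 0" by simp
    define e where "e = \<bar>D\<bar> / (2 * (x + 1))"
    have "e > 0" using x0 \<open>\<bar>D\<bar> > 0\<close> by (simp add: e_def)
    have "x * e < \<bar>D\<bar>" using x0 \<open>\<bar>D\<bar> > 0\<close> by (simp add: e_def field_simps add_nonneg_pos)
    with bound[OF \<open>e > 0\<close>] show False by simp
  qed
  then show ?thesis by (simp add: D_def)
qed

lemma irr_lin: fixes r s :: int assumes "(\<alpha>::real) \<notin> \<rat>" "of_int r * \<alpha> = of_int s" shows "r = 0 \<and> s = 0"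
proof (cases "r = 0")
  case False
  then have "\<alpha> = of_int s / of_int r" using assms(2)
    by (metis nonzero_mult_div_cancel_left of_int_eq_0_iff)
  then have "\<alpha> \<in> \<rat>" by (metis Rats_divide Rats_of_int)
  with assms show ?thesis by simp
qed (use assms in auto)

lemma eigen:
  assumes "\<alpha> \<notin> \<rat>" "isometric_automorphism \<alpha> A"
  shows "of_int (A$2$1) + \<alpha> * of_int (A$2$2) = \<alpha> * (of_int (A$1$1) + \<alpha> * of_int (A$1$2))"
proof -
  have "of_int (A$2$1) + \<alpha> * of_int (A$2$2) = (of_int (A$1$1) + \<alpha> * of_int (A$1$2)) * \<alpha>"
  proof (rule density[OF assms(1)])
    fix p q :: int assume "of_int p + \<alpha> * of_int q \<ge> 0"
    from key_ineq[OF assms(2) this] show "(of_int (A$1$1) + \<alpha> * of_int (A$1$2)) * of_int p + (of_int (A$2$1) + \<alpha> * of_int (A$2$2)) * of_int q \<ge> 0"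
      by (simp add: algebra_simps)
  qed
  then show ?thesis by (simp add: mult_ac)
qed

theorem mainTheorem10:
  fixes \<alpha> :: real and A1 A2 :: "int^2^2"
  assumes "\<alpha> > 0" and "quadratic_irrational \<alpha>"
    and "A1 \<in> GL2Z" and "A2 \<in> GL2Z"
    and "isometric_automorphism \<alpha> A1" and "isometric_automorphism \<alpha> A2"
  shows "A1 ** A2 = A2 ** A1"
proof -
  have irr: "\<alpha> \<notin> \<rat>" using assms(2) by (simp add: quadratic_irrational_def)
  define a1 b1 c1 d1 where "a1 = A1$1$1" "b1 = A1$1$2" "c1 = A1$2$1" "d1 = A1$2$2"
  define a2 b2 c2 d2 where "a2 = A2$1$1" "b2 = A2$1$2" "c2 = A2$2$1" "d2 = A2$2$2"
  have e1: "of_int c1 + \<alpha> * of_int d1 = \<alpha> * (of_int a1 + \<alpha> * of_int b1)"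
    using eigen[OF irr assms(5)] by (simp add: a1_b1_c1_d1_def)
  have e2: "of_int c2 + \<alpha> * of_int d2 = \<alpha> * (of_int a2 + \<alpha> * of_int b2)"
    using eigen[OF irr assms(6)] by (simp add: a2_b2_c2_d2_def)
  have "of_int (b2*(a1-d1) - b1*(a2-d2)) * \<alpha> = of_int (b2*c1 - b1*c2)"
  proof -
    have "of_int b2 * (of_int c1 + \<alpha> * of_int d1 - \<alpha> * (of_int a1 + \<alpha> * of_int b1))
        - of_int b1 * (of_int c2 + \<alpha> * of_int d2 - \<alpha> * (of_int a2 + \<alpha> * of_int b2)) = (0::real)"
      using e1 e2 by simp
    then show ?thesis by (simp add: algebra_simps)
  qed
  from irr_lin[OF irr this] have r1: "b2*(a1-d1) = b1*(a2-d2)" "b2*c1 = b1*c2" by auto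
  have "of_int (b1*(a2-d2) - b2*(a1-d1)) * \<alpha>\<^sup>2 = of_int (c1*(a2-d2) - c2*(a1-d1))"
  proof -
    have "of_int (a2-d2) * (of_int c1 + \<alpha> * of_int d1 - \<alpha> * (of_int a1 + \<alpha> * of_int b1))
        - of_int (a1-d1) * (of_int c2 + \<alpha> * of_int d2 - \<alpha> * (of_int a2 + \<alpha> * of_int b2)) = (0::real)"
      using e1 e2 by simp
    then show ?thesis by (simp add: algebra_simps power2_eq_square)
  qed
  then have "real_of_int (c1*(a2-d2) - c2*(a1-d1)) = 0" using r1 by simp
  then have r2: "c1*(a2-d2) = c2*(a1-d1)" by (metis of_int_eq_0_iff eq_iff_diff_eq_0)
  show ?thesis
    unfolding vec_eq_iff forall_2 matrix_matrix_mult_def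
    using r1 r2 by (simp add: sum_2 a1_b1_c1_d1_def a2_b2_c2_d2_def algebra_simps)
qed
end
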